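(* Let $G$ be a graph with Hermitian adjacency matrix $A$ that has universal perfect state transfer, and let $u$ be a vertex of $G$. Then for all vertices $v \neq u$ we have $t_{u,v} < t_{u,u}$.
   Context: A (weighted) graph $G$ on $n$ vertices is given by its adjacency matrix $A$, an $n\times n$ complex matrix, here assumed Hermitian. The continuous-time quantum walk is $U(t)=\exp(-\mathtt{i} A t)$. For vertices $v,w$, let $T_{v,w}=\{t\in\mathbb{R}^{+} : |\langle w| e^{-\mathtt{i} A t}|v\rangle|=1\}$ be the set of (positive) times at which perfect state transfer occurs from $v$ to $w$. $G$ has universal perfect state transfer if $T_{v,w}\neq\emptyset$ for every pair of vertices $v,w$. In that case each $T_{v,w}$ is a discrete additive subgroup of $\mathbb{R}$ (intersected with the positive reals), so it has a smallest element, denoted $t_{v,w}=\min T_{v,w}$. *)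

theory Defs
  imports "HOL-Analysis.Analysis"
begin

primrec mat_pow :: "complex^'n::finite^'n \<Rightarrow> nat \<Rightarrow> complex^'n^'n" where
  "mat_pow M 0 = mat 1"
| "mat_pow M (Suc k) = M ** mat_pow M k"

definition mat_exp :: "complex^'n::finite^'n \<Rightarrow> complex^'n^'n" where
  "mat_exp M = (\<Sum>k. (1 / fact k) *\<^sub>R mat_pow M k)"

definition hermitian_mat :: "complex^'n::finite^'n \<Rightarrow> bool" where
  "hermitian_mat A \<longleftrightarrow> (\<forall>i j. A $ i $ j = cnj (A $ j $ i))"

definition walk :: "complex^'n::finite^'n \<Rightarrow> real \<Rightarrow> complex^'n^'n" where
  "walk A t = mat_exp (\<chi> i j. - \<i> * complex_of_real t * A $ i $ j)"

text \<open>Set of positive PST times from v to w; the entry <w|U(t)|v> is row w, column v.\<close>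
definition pst_times :: "complex^'n::finite^'n \<Rightarrow> 'n \<Rightarrow> 'n \<Rightarrow> real set" where
  "pst_times A v w = {t. t > 0 \<and> cmod (walk A t $ w $ v) = 1}"

definition universal_pst :: "complex^'n::finite^'n \<Rightarrow> bool" where
  "universal_pst A \<longleftrightarrow> (\<forall>v w. pst_times A v w \<noteq> {})"

definition min_pst_time :: "complex^'n::finite^'n \<Rightarrow> 'n \<Rightarrow> 'n \<Rightarrow> real" where
  "min_pst_time A v w = Inf (pst_times A v w)"

end

theory Submission
  imports Defs
begin


typedef (overloaded) 'n op = "UNIV :: ((complex^'n::finite) \<Rightarrow>\<^sub>L (complex^'n)) set"
  morphisms rep absop by auto

setup_lifting type_definition_op

instantiation op :: (finite) real_normed_vector
begin
lift_definition norm_op :: "'a op \<Rightarrow> real" is norm .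
lift_definition minus_op :: "'a op \<Rightarrow> 'a op \<Rightarrow> 'a op" is "(-)" .
lift_definition plus_op :: "'a op \<Rightarrow> 'a op \<Rightarrow> 'a op" is "(+)" .
lift_definition uminus_op :: "'a op \<Rightarrow> 'a op" is "uminus" .
lift_definition zero_op :: "'a op" is "0" .
lift_definition scaleR_op :: "real \<Rightarrow> 'a op \<Rightarrow> 'a op" is "scaleR" .
definition dist_op :: "'a op \<Rightarrow> 'a op \<Rightarrow> real" where "dist_op a b = norm (a - b)"
definition uniformity_op :: "('a op \<times> 'a op) filter" where
  "uniformity_op = (INF e\<in>{0 <..}. principal {(x, y). dist x y < e})"
definition open_op :: "'a op set \<Rightarrow> bool"
  where "open_op S = (\<forall>x\<in>S. \<forall>\<^sub>F (x', y) in uniformity. x' = x \<longrightarrow> y \<in> S)"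
definition sgn_op :: "'a op \<Rightarrow> 'a op" where "sgn_op x = scaleR (inverse (norm x)) x"
instance
  apply standard
  unfolding dist_op_def open_op_def sgn_op_def uniformity_op_def
  apply (rule refl | (transfer, force simp: norm_triangle_ineq algebra_simps))+
  done
end

instantiation op :: (finite) real_normed_algebra_1
begin
lift_definition times_op :: "'a op \<Rightarrow> 'a op \<Rightarrow> 'a op" is blinfun_compose .
lift_definition one_op :: "'a op" is id_blinfun .
instance
proof
  fix a b c :: "'a op" and r :: real
  show "a * b * c = a * (b * c)" by transfer (auto intro: blinfun_eqI)
  show "1 * a = a" by transfer (auto intro: blinfun_eqI)
  show "a * 1 = a" by transfer (auto intro: blinfun_eqI)
  show "(a + b) * c = a * c + b * c" by transfer (auto intro: blinfun_eqI simp: blinfun.bilinear_simps)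
  show "a * (b + c) = a * b + a * c" by transfer (auto intro: blinfun_eqI simp: blinfun.bilinear_simps)
  show "r *\<^sub>R a * b = r *\<^sub>R (a * b)" by transfer (auto intro: blinfun_eqI simp: blinfun.bilinear_simps)
  show "a * r *\<^sub>R b = r *\<^sub>R (a * b)" by transfer (auto intro: blinfun_eqI simp: blinfun.bilinear_simps)
  show "norm (a * b) \<le> norm a * norm b" by transfer (rule norm_blinfun_compose)
  show "norm (1::'a op) = 1" by transfer simp
  show "(0::'a op) \<noteq> 1"
  proof transfer
    show "(0:: (complex^'a) \<Rightarrow>\<^sub>L (complex^'a)) \<noteq> id_blinfun"
    proof
      assume "(0:: (complex^'a) \<Rightarrow>\<^sub>L (complex^'a)) = id_blinfun"
      then have "blinfun_apply (0:: (complex^'a) \<Rightarrow>\<^sub>L (complex^'a)) (axis undefined 1) = axis undefined 1"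
        by (metis blinfun_apply_id_blinfun)
      then show False by (simp add: axis_eq_0_iff)
    qed
  qed
qed
end

lemma dist_rep: "dist (rep a) (rep b) = dist a b"
  by (simp add: dist_op_def dist_norm norm_op.rep_eq minus_op.rep_eq)

instance op :: (finite) banach
proof
  fix X :: "nat \<Rightarrow> 'a op" assume "Cauchy X"
  then have "Cauchy (\<lambda>n. rep (X n))" by (simp add: Cauchy_def dist_rep)
  then obtain L where L: "(\<lambda>n. rep (X n)) \<longlonglongrightarrow> L" using convergent_eq_Cauchy by blast
  have "X \<longlonglongrightarrow> absop L"
  proof (rule metric_LIMSEQ_I)
    fix r :: real assume "0 < r"
    from metric_LIMSEQ_D[OF L this] obtain N where "\<forall>n\<ge>N. dist (rep (X n)) L < r" by blast
    then show "\<exists>N. \<forall>n\<ge>N. dist (X n) (absop L) < r"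
      by (metis dist_rep absop_inverse UNIV_I)
  qed
  then show "convergent X" by (auto simp: convergent_def)
qed




lemma bounded_linear_vec_lambda:
  fixes f :: "'i::finite \<Rightarrow> 'a::real_normed_vector \<Rightarrow> 'b::real_normed_vector"
  assumes "\<And>i. bounded_linear (f i)"
  shows "bounded_linear (\<lambda>x. \<chi> i. f i x)"
proof -
  have "\<forall>i. \<exists>K. \<forall>x. norm (f i x) \<le> norm x * K"
    using assms bounded_linear.bounded by blast
  then obtain K where K: "\<And>i x. norm (f i x) \<le> norm x * K i" by metis
  show ?thesis
  proof (rule bounded_linear_intro[where K="\<Sum>i\<in>UNIV. K i"])
    fix x y :: 'a and r :: real
    show "(\<chi> i. f i (x + y)) = (\<chi> i. f i x) + (\<chi> i. f i y)"
      using assms by (simp add: vec_eq_iff linear_add bounded_linear.linear)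
    show "(\<chi> i. f i (r *\<^sub>R x)) = r *\<^sub>R (\<chi> i. f i x)"
      using assms by (simp add: vec_eq_iff linear_scale bounded_linear.linear)
    have "norm (\<chi> i. f i x) \<le> (\<Sum>i\<in>UNIV. norm ((\<chi> i. f i x) $ i))"
      unfolding norm_vec_def by (rule L2_set_le_sum) simp
    also have "\<dots> \<le> (\<Sum>i\<in>UNIV. norm x * K i)"
      by (rule sum_mono) (simp add: K)
    also have "\<dots> = norm x * (\<Sum>i\<in>UNIV. K i)" by (simp add: sum_distrib_left)
    finally show "norm (\<chi> i. f i x) \<le> norm x * (\<Sum>i\<in>UNIV. K i)" .
  qed
qed

lemma bl_mvec: "bounded_linear (\<lambda>x::complex^'n::finite. N *v x)"
proof -
  have "linear (\<lambda>x::complex^'n. N *v x)"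
    by (rule linearI) (simp_all add: matrix_vector_right_distrib vec_eq_iff matrix_vector_mult_def
         sum.distrib scaleR_sum_right algebra_simps)
  then show ?thesis by (simp add: linear_conv_bounded_linear)
qed

lemma bl_mvec2: "bounded_linear (\<lambda>N::complex^'n::finite^'n. N *v x)"
proof -
  have "linear (\<lambda>N::complex^'n^'n. N *v x)"
    by (rule linearI) (simp_all add: matrix_vector_mult_add_rdistrib vec_eq_iff matrix_vector_mult_def
         sum.distrib scaleR_sum_right algebra_simps)
  then show ?thesis by (simp add: linear_conv_bounded_linear)
qed

definition Phi :: "complex^'n::finite^'n \<Rightarrow> 'n op" where
  "Phi N = absop (Blinfun (\<lambda>x. N *v x))"

lemma rep_Phi: "blinfun_apply (rep (Phi N)) x = N *v x"
  by (simp add: Phi_def absop_inverse bounded_linear_Blinfun_apply bl_mvec)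

lemma op_eqI: "(\<And>x. blinfun_apply (rep a) x = blinfun_apply (rep b) x) \<Longrightarrow> a = b"
  by (metis blinfun_eqI rep_inject)

lemma Phi_mult: "Phi (N ** K) = Phi N * Phi K"
  by (rule op_eqI) (simp add: rep_Phi times_op.rep_eq matrix_vector_mul_assoc)

lemma Phi_one: "Phi (mat 1) = 1"
  by (rule op_eqI) (simp add: rep_Phi one_op.rep_eq)

lemma Phi_pow: "Phi (mat_pow N k) = Phi N ^ k"
  by (induction k) (simp_all add: Phi_one Phi_mult)

lemma Phi_scaleR: "Phi (r *\<^sub>R N) = r *\<^sub>R Phi N"
  by (rule op_eqI) (simp add: rep_Phi scaleR_op.rep_eq vec_eq_iff matrix_vector_mult_def
         scaleR_sum_right blinfun.scaleR_left)

definition Psi :: "'n::finite op \<Rightarrow> complex^'n^'n" where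
  "Psi L = (\<chi> i j. (blinfun_apply (rep L) (axis j 1)) $ i)"

lemma bl_rep: "bounded_linear rep"
  apply (rule bounded_linear_intro[where K=1])
    apply (simp add: plus_op.rep_eq)
   apply (simp add: scaleR_op.rep_eq)
  apply (simp add: norm_op.rep_eq)
  done

lemma bl_Psi: "bounded_linear Psi"
  unfolding Psi_def
  apply (rule bounded_linear_vec_lambda)+
  apply (rule bounded_linear_compose[OF bounded_linear_vec_nth])
  apply (rule bounded_linear_compose[OF blinfun.bounded_linear_left])
  apply (rule bl_rep)
  done

lemma Psi_Phi: "Psi (Phi N) = N"
  by (simp add: Psi_def rep_Phi vec_eq_iff matrix_vector_mult_def axis_def if_distrib sum.delta' cong: if_cong)

lemma exp_apply: "blinfun_apply (rep (exp (Phi N))) x = mat_exp N *v x"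
proof -
  define G where "G L = blinfun_apply (rep L) x - Psi L *v x" for L
  have blG: "bounded_linear G"
    unfolding G_def
    by (intro bounded_linear_sub bounded_linear_compose[OF blinfun.bounded_linear_left] bl_rep
        bounded_linear_compose[OF bl_mvec2] bl_Psi)
  have sm: "summable (\<lambda>n. Phi N ^ n /\<^sub>R fact n)" by (rule summable_exp_generic)
  have "G (exp (Phi N)) = (\<Sum>n. G (Phi N ^ n /\<^sub>R fact n))"
    unfolding exp_def by (rule bounded_linear.suminf[OF blG sm])
  also have "\<dots> = 0"
  proof -
    have "G (Phi N ^ n /\<^sub>R fact n) = 0" for n
    proof -
      have "G (Phi N ^ n /\<^sub>R fact n) = (inverse (fact n)) *\<^sub>R G (Phi (mat_pow N n))"
        by (simp add: linear_simps(5)[OF blG] Phi_pow)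
      also have "G (Phi (mat_pow N n)) = 0"
        by (simp add: G_def Psi_Phi rep_Phi)
      finally show ?thesis by simp
    qed
    then show ?thesis by simp
  qed
  finally have G0: "G (exp (Phi N)) = 0" .
  have "Psi (exp (Phi N)) = (\<Sum>n. Psi (Phi N ^ n /\<^sub>R fact n))"
    unfolding exp_def by (rule bounded_linear.suminf[OF bl_Psi sm])
  also have "\<dots> = mat_exp N"
  proof -
    have "Psi (Phi N ^ n /\<^sub>R fact n) = (1 / fact n) *\<^sub>R mat_pow N n" for n
    proof -
      have "Psi (Phi N ^ n /\<^sub>R fact n) = (inverse (fact n)) *\<^sub>R Psi (Phi (mat_pow N n))"
        by (simp add: linear_simps(5)[OF bl_Psi] Phi_pow)
      then show ?thesis by (simp add: Psi_Phi inverse_eq_divide)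
    qed
    then show ?thesis unfolding mat_exp_def by simp
  qed
  finally show ?thesis using G0 by (simp add: G_def)
qed




definition M0 :: "complex^'n::finite^'n \<Rightarrow> complex^'n^'n" where
  "M0 A = (\<chi> i j. - \<i> * A $ i $ j)"

lemma walk_apply: "walk A t *v x = blinfun_apply (rep (exp (t *\<^sub>R Phi (M0 A)))) x"
proof -
  have "(\<chi> i j. - \<i> * complex_of_real t * A $ i $ j) = t *\<^sub>R M0 A"
    by (simp add: M0_def vec_eq_iff) (simp add: scaleR_conv_of_real)
  then show ?thesis
    by (simp add: walk_def exp_apply Phi_scaleR[symmetric])
qed

lemma walk_add: "walk A (s + t) *v x = walk A s *v (walk A t *v x)"
proof -
  have "exp ((s + t) *\<^sub>R Phi (M0 A)) = exp (s *\<^sub>R Phi (M0 A)) * exp (t *\<^sub>R Phi (M0 A))"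
    by (simp add: scaleR_add_left exp_add_commuting)
  then show ?thesis by (simp add: walk_apply times_op.rep_eq)
qed

lemma walk_zero: "walk A 0 *v x = x"
  by (simp add: walk_apply one_op.rep_eq)

lemma walk_deriv:
  "((\<lambda>t. walk A t *v x) has_vector_derivative (M0 A *v (walk A t *v x))) (at t)"
proof -
  have d: "((\<lambda>t. exp (t *\<^sub>R Phi (M0 A))) has_vector_derivative Phi (M0 A) * exp (t *\<^sub>R Phi (M0 A))) (at t)"
    by (rule exp_scaleR_has_vector_derivative_left)
  have bl: "bounded_linear (\<lambda>L. blinfun_apply (rep L) x)"
    by (intro bounded_linear_compose[OF blinfun.bounded_linear_left] bl_rep)
  from bounded_linear.has_vector_derivative[OF bl d] show ?thesis
    by (simp add: walk_apply times_op.rep_eq rep_Phi)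
qed

lemma walk_cont: "continuous_on UNIV (\<lambda>t. (walk A t *v x) $ w)"
proof -
  have "continuous_on UNIV (\<lambda>t. walk A t *v x)"
    by (metis continuous_at_imp_continuous_on has_vector_derivative_continuous walk_deriv)
  then show ?thesis by (intro continuous_intros)
qed

lemma inner_cnj: "(a::complex) \<bullet> b = Re (cnj a * b)"
  by (simp add: inner_complex_def)

lemma skew:
  assumes "hermitian_mat A"
  shows "(M0 A *v y) \<bullet> y = 0"
proof -
  define S where "S = (\<Sum>i\<in>UNIV. \<Sum>j\<in>UNIV. A $ j $ i * cnj (y $ j) * y $ i)"
  have h: "\<And>i j. cnj (A $ i $ j) = A $ j $ i" using assms
    by (metis complex_cnj_cnj hermitian_mat_def)
  have e1: "(M0 A *v y) \<bullet> y = Re (\<Sum>i\<in>UNIV. cnj ((M0 A *v y) $ i) * y $ i)"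
    by (simp add: inner_vec_def inner_cnj Re_sum)
  have e2: "(\<Sum>i\<in>UNIV. cnj ((M0 A *v y) $ i) * y $ i) = \<i> * S"
    by (simp add: S_def M0_def matrix_vector_mult_def sum_distrib_left sum_distrib_right h
         algebra_simps)
  have "cnj S = S"
  proof -
    have "cnj S = (\<Sum>i\<in>UNIV. \<Sum>j\<in>UNIV. A $ i $ j * y $ j * cnj (y $ i))"
      by (simp add: S_def h)
    also have "\<dots> = S" unfolding S_def
      by (subst sum.swap) (simp add: algebra_simps)
    finally show ?thesis .
  qed
  then have "Im S = 0" by (metis cnj.simps(2) complex.sel(2) neg_equal_zero)
  then show ?thesis using e1 e2 by simp
qed

lemma walk_norm:
  assumes "hermitian_mat A"
  shows "norm (walk A t *v x) = norm x"
proof -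
  define f where "f t = (walk A t *v x) \<bullet> (walk A t *v x)" for t
  have "(f has_real_derivative 0) (at s)" for s
  proof -
    let ?D = "M0 A *v (walk A s *v x)"
    have d: "((\<lambda>t. walk A t *v x) has_derivative (\<lambda>h. h *\<^sub>R ?D)) (at s)"
      using walk_deriv[of A x s] by (simp add: has_vector_derivative_def)
    have "(f has_derivative (\<lambda>h. (walk A s *v x) \<bullet> (h *\<^sub>R ?D) + (h *\<^sub>R ?D) \<bullet> (walk A s *v x))) (at s)"
      unfolding f_def by (rule has_derivative_inner[OF d d])
    moreover have "(\<lambda>h. (walk A s *v x) \<bullet> (h *\<^sub>R ?D) + (h *\<^sub>R ?D) \<bullet> (walk A s *v x)) = (*) 0"
      using skew[OF assms, of "walk A s *v x"] by (auto simp: inner_commute)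
    ultimately show ?thesis by (simp add: has_field_derivative_def)
  qed
  then have "f t = f 0" by (meson DERIV_isconst_all)
  then have "norm (walk A t *v x) ^ 2 = norm x ^ 2"
    by (simp add: f_def walk_zero power2_norm_eq_inner)
  then show ?thesis by simp
qed




lemma entry_axis: "(W *v axis u 1) $ w = W $ w $ u"
  by (simp add: matrix_vector_mult_def axis_def if_distrib sum.delta' cong: if_cong)

lemma mvec_smult: "(W::complex^'n::finite^'n) *v (c *s x) = c *s (W *v x)"
  by (simp add: vec_eq_iff matrix_vector_mult_def sum_distrib_left algebra_simps)

lemma unit_conc:
  fixes y :: "complex^'n::finite"
  assumes "norm y = 1" "cmod (y $ w) = 1" "j \<noteq> w"
  shows "y $ j = 0"
proof -
  have "(\<Sum>i\<in>UNIV. cmod (y $ i) ^ 2) = 1"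
    using assms(1) by (simp add: norm_vec_def L2_set_def)
  then have "cmod (y $ w) ^ 2 + (\<Sum>i\<in>UNIV - {w}. cmod (y $ i) ^ 2) = 1"
    by (simp add: sum.remove[of UNIV w])
  then have "(\<Sum>i\<in>UNIV - {w}. cmod (y $ i) ^ 2) = 0" using assms(2) by simp
  then have "\<forall>i\<in>UNIV - {w}. cmod (y $ i) ^ 2 = 0"
    by (subst sum_nonneg_eq_0_iff[symmetric]) auto
  then show ?thesis using assms(3) by auto
qed

lemma col_phase:
  assumes "hermitian_mat A" "cmod (walk A s $ w $ u) = 1"
  shows "walk A s *v axis u 1 = (walk A s $ w $ u) *s axis w 1"
proof -
  have n: "norm (walk A s *v axis u 1) = 1" using walk_norm[OF assms(1)] by simp
  show ?thesis
  proof (subst vec_eq_iff, intro allI)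
    fix j
    show "(walk A s *v axis u 1) $ j = ((walk A s $ w $ u) *s axis w 1) $ j"
    proof (cases "j = w")
      case True then show ?thesis by (simp only: entry_axis vector_smult_component True) (simp add: axis_def)
    next
      case False
      then have "(walk A s *v axis u 1) $ j = 0"
        using unit_conc[OF n _ False] assms(2) by (simp add: entry_axis)
      then show ?thesis using False by (simp add: axis_def)
    qed
  qed
qed

lemma shift:
  assumes "hermitian_mat A" "cmod (walk A s $ u $ u) = 1" "cmod (walk A a $ v $ u) = 1"
  shows "cmod (walk A (a - s) $ v $ u) = 1"
proof -
  define e where "e = (axis u 1 :: complex^_)"
  define d where "d = walk A s $ u $ u"
  have d0: "d \<noteq> 0" using assms(2) d_def by auto
  have c: "walk A s *v e = d *s e" using col_phase[OF assms(1,2)] by (simp add: e_def d_def)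
  have "e = walk A (-s + s) *v e" by (simp add: walk_zero)
  also have "\<dots> = d *s (walk A (-s) *v e)" by (simp only: walk_add c mvec_smult)
  finally have "walk A (-s) *v e = (1/d) *s e" using d0
    by (simp add: vec_eq_iff field_simps)
  then have "walk A (a - s) *v e = (1/d) *s (walk A a *v e)"
    by (metis diff_conv_add_uminus mvec_smult walk_add)
  then have "walk A (a - s) $ v $ u = (1/d) * walk A a $ v $ u"
    by (metis e_def entry_axis vector_smult_component)
  then show ?thesis using assms(2,3) d_def by (simp add: norm_divide)
qed

theorem lemma1:
  fixes A :: "complex^'n::finite^'n" and u v :: 'n
  assumes "hermitian_mat A"
    and "universal_pst A"
    and "v \<noteq> u"
  shows "min_pst_time A u v < min_pst_time A u u"
proof -
  define g where "g w t = cmod (walk A t $ w $ u)" for w t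
  have gc: "continuous_on UNIV (g w)" for w
  proof -
    have "continuous_on UNIV (\<lambda>t. (walk A t *v axis u 1) $ w)" by (rule walk_cont)
    then have "continuous_on UNIV (\<lambda>t. walk A t $ w $ u)" by (simp add: entry_axis)
    then show ?thesis unfolding g_def by (rule continuous_on_norm)
  qed
  have cl: "closed {t. g w t = 1}" for w
    by (rule closed_Collect_eq[OF gc continuous_on_const])
  have T: "pst_times A u w = {t. 0 < t} \<inter> {t. g w t = 1}" for w
    by (auto simp: pst_times_def g_def)
  let ?Tv = "pst_times A u v" and ?Tu = "pst_times A u u"
  have ne: "?Tv \<noteq> {}" "?Tu \<noteq> {}" using assms(2) by (auto simp: universal_pst_def)
  have bb: "bdd_below (pst_times A u w)" for w
    by (rule bdd_belowI[where m=0]) (auto simp: pst_times_def)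
  have clos: "Inf (pst_times A u w) \<in> {t. g w t = 1}" if "pst_times A u w \<noteq> {}" for w
  proof -
    have "Inf (pst_times A u w) \<in> closure (pst_times A u w)"
      by (rule closure_contains_Inf[OF that bb])
    also have "\<dots> \<subseteq> closure {t. g w t = 1}" by (rule closure_mono) (auto simp: T)
    also have "\<dots> = {t. g w t = 1}" using cl by (simp add: closure_closed)
    finally show ?thesis .
  qed
  have g0: "g v 0 = 0"
    using assms(3) by (simp add: g_def entry_axis[symmetric] walk_zero axis_def)
  have "isCont (g v) 0" using gc[of v] by (simp add: continuous_on_eq_continuous_at)
  then obtain r where r: "r > 0" "\<And>t. dist t 0 < r \<Longrightarrow> dist (g v t) (g v 0) < 1"
    by (metis continuous_at_eps_delta zero_less_one)
  have lowr: "r \<le> t" if "t \<in> ?Tv" for t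
  proof (rule ccontr)
    assume "\<not> r \<le> t"
    moreover have "t > 0" "g v t = 1" using that by (auto simp: T)
    ultimately show False using r(2)[of t] g0 by simp
  qed
  define m where "m = Inf ?Tv"
  have mr: "r \<le> m" unfolding m_def by (rule cInf_greatest[OF ne(1)]) (rule lowr)
  have mT: "m \<in> ?Tv" using clos[OF ne(1)] mr r(1) by (simp add: T m_def)
  have mmin: "m \<le> t" if "t \<in> ?Tv" for t unfolding m_def by (rule cInf_lower[OF that bb])
  have gmv: "cmod (walk A m $ v $ u) = 1" using mT by (simp add: pst_times_def)
  have mu0: "walk A m $ u $ u = 0"
  proof -
    have "walk A m *v axis u 1 = (walk A m $ v $ u) *s axis v 1" by (rule col_phase[OF assms(1) gmv])
    then have "(walk A m *v axis u 1) $ u = 0" using assms(3) by (simp add: axis_def)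
    then show ?thesis by (simp add: entry_axis)
  qed
  show ?thesis
  proof (rule ccontr)
    assume "\<not> min_pst_time A u v < min_pst_time A u u"
    then have le: "Inf ?Tu \<le> m" by (simp add: min_pst_time_def m_def)
    show False
    proof (cases "Inf ?Tu < m")
      case True
      then obtain s where s: "s \<in> ?Tu" "s < m" using cInf_lessD[OF ne(2)] by blast
      have "cmod (walk A (m - s) $ v $ u) = 1"
        by (rule shift[OF assms(1) _ gmv]) (use s in \<open>simp add: pst_times_def\<close>)
      then have "m - s \<in> ?Tv" using s by (simp add: pst_times_def)
      then have "m \<le> m - s" by (rule mmin)
      moreover have "s > 0" using s by (simp add: pst_times_def)
      ultimately show False by simp
    next
      case False
      then have "Inf ?Tu = m" using le by simp
      then have "g u m = 1" using clos[OF ne(2)] by simp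
      then show False using mu0 by (simp add: g_def)
    qed
  qed
qed


end
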